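(* Assume (CVX), (SM), (QSM) and (SCO). Let $L_{\max}=\max\{L_1,\dots,L_n\}$, $\kappa=\ell/\mu$, and let $\tau\ge 1$, $R\ge 1$ be integers. Let the constant step-size satisfy $0<\gamma_k\equiv\gamma\le \frac{1}{\ell\tau+2(\tau-1)L_{\max}\sqrt{\kappa}}$. Then the iterates of deterministic (full-batch) PEARL-SGD satisfy $$\|\mathbf{x}_{\tau R}-\mathbf{x}_\star\|^2\le (1-\gamma\tau\mu\zeta)^R\,\|\mathbf{x}_0-\mathbf{x}_\star\|^2,$$ where $\zeta=2-\gamma\ell\tau-2(\tau-1)\gamma L_{\max}\sqrt{\kappa/3}$, which is positive under the stated step-size condition.
   Context: Setup. Let $n\ge1$, $d_1,\dots,d_n\ge1$, $D=d_1+\dots+d_n$. A joint action is $\mathbf{x}=(x^1,\dots,x^n)\in\mathbb{R}^D$ with $x^i\in\mathbb{R}^{d_i}$; $x^{-i}\in\mathbb{R}^{D-d_i}$ denotes all blocks except the $i$-th, and $f_i(x^i;x^{-i})=f_i(x^1,\dots,x^n)$. For each $i$, $f_i:\mathbb{R}^D\to\mathbb{R}$ is differentiable in $x^i$, and $\nabla f_i(x^i;x^{-i})$ denotes the gradient of $f_i$ with respect to $x^i$ only. The joint gradient operator is $\mathbb{F}(\mathbf{x})=(\nabla f_1(x^1;x^{-1}),\dots,\nabla f_n(x^n;x^{-n}))\in\mathbb{R}^D$. Assumptions. (CVX): for each $i$ and each $x^{-i}$, $f_i(\cdot;x^{-i})$ is convex on $\mathbb{R}^{d_i}$. (SM): for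 each $i$ there is $L_i>0$ with $\|\nabla f_i(x^i;x^{-i})-\nabla f_i(y^i;x^{-i})\|\le L_i\|x^i-y^i\|$ for all $x^i,y^i,x^{-i}$. (QSM): there is a unique $\mathbf{x}_\star$ with $\mathbb{F}(\mathbf{x}_\star)=0$, and $\mu>0$ with $\langle\mathbb{F}(\mathbf{x}),\mathbf{x}-\mathbf{x}_\star\rangle\ge\mu\|\mathbf{x}-\mathbf{x}_\star\|^2$ for all $\mathbf{x}$. (SCO): there is $\ell>0$ with $\langle\mathbb{F}(\mathbf{x}),\mathbf{x}-\mathbf{x}_\star\rangle\ge\frac1\ell\|\mathbb{F}(\mathbf{x})\|^2$ for all $\mathbf{x}$. Deterministic PEARL-SGD: given $\mathbf{x}_0\in\mathbb{R}^D$, synchronization interval $\tau\ge1$, number of rounds $R\ge1$, step-sizes $\gamma_k>0$: for each round $p=0,\dots,R-1$, each player $i$ and each $k=\tau p,\dots,\tau(p+1)-1$, set $x^i_{k+1}=x^i_k-\gamma_k\nabla f_i(x^i_k;x^{-i}_{\tau p})$ (the other players' blocks are frozen at their values at the last synchronization time $\tau p$). Write $\mathbf{x}_k=(x^1_k,\dots,x^n_k)$; the output is $\mathbf{x}_{\tau R}$. *)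

theory Defs
  imports "HOL-Analysis.Analysis"
begin

text \<open>The joint action space R^D is modelled as real^'c, with 'c a finite type of
  D coordinates; blk c < n is the player owning coordinate c, so block i is
  {c. blk c = i} and d_i = card of that set.\<close>

definition proj :: "('c \<Rightarrow> nat) \<Rightarrow> nat \<Rightarrow> real^'c \<Rightarrow> real^'c" where
  "proj blk i v = (\<chi> c. if blk c = i then v $ c else 0)"

definition joint_grad :: "(nat \<Rightarrow> real^'c \<Rightarrow> real^'c) \<Rightarrow> ('c \<Rightarrow> nat) \<Rightarrow> real^'c \<Rightarrow> real^'c" where
  "joint_grad grad blk x = (\<chi> c. grad (blk c) x $ c)"

text \<open>One local step within a round whose synchronisation point is y: every player i
  updates its own block using the gradient at (z^i; y^{-i}).\<close>
definition local_step :: "(nat \<Rightarrow> real^'c \<Rightarrow> real^'c) \<Rightarrow> ('c \<Rightarrow> nat) \<Rightarrow> real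
    \<Rightarrow> real^'c \<Rightarrow> real^'c \<Rightarrow> real^'c" where
  "local_step grad blk \<gamma> y z =
     (\<chi> c. z $ c - \<gamma> * grad (blk c) (y + proj blk (blk c) (z - y)) $ c)"

definition pearl_round :: "(nat \<Rightarrow> real^'c \<Rightarrow> real^'c) \<Rightarrow> ('c \<Rightarrow> nat) \<Rightarrow> real
    \<Rightarrow> nat \<Rightarrow> real^'c \<Rightarrow> real^'c" where
  "pearl_round grad blk \<gamma> \<tau> y = (local_step grad blk \<gamma> y ^^ \<tau>) y"

definition pearl :: "(nat \<Rightarrow> real^'c \<Rightarrow> real^'c) \<Rightarrow> ('c \<Rightarrow> nat) \<Rightarrow> real
    \<Rightarrow> nat \<Rightarrow> nat \<Rightarrow> real^'c \<Rightarrow> real^'c" where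
  "pearl grad blk \<gamma> \<tau> R x0 = (pearl_round grad blk \<gamma> \<tau> ^^ R) x0"

end

theory Submission
  imports Defs
begin


lemma line_deriv0:
  fixes g :: "'a::real_inner \<Rightarrow> real"
  assumes D: "\<forall>v. (g has_derivative (\<lambda>h. G v \<bullet> h)) (at v)"
  shows "((\<lambda>t. g (x + t *\<^sub>R d)) has_derivative (\<lambda>s. s * (G (x + t *\<^sub>R d) \<bullet> d))) (at t within S)"
proof -
  have 1: "((\<lambda>t. x + t *\<^sub>R d) has_derivative (\<lambda>s. s *\<^sub>R d)) (at t within S)"
    by (auto intro!: derivative_eq_intros)
  show ?thesis
    using has_derivative_compose[OF 1 D[rule_format]] by simp
qed

lemma line_deriv:
  fixes g :: "'a::real_inner \<Rightarrow> real"
  assumes D: "\<forall>v. (g has_derivative (\<lambda>h. G v \<bullet> h)) (at v)"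
  shows "((\<lambda>t. g (x + t *\<^sub>R d)) has_real_derivative (G (x + t *\<^sub>R d) \<bullet> d)) (at t within S)"
proof -
  have 1: "((\<lambda>t. x + t *\<^sub>R d) has_derivative (\<lambda>s. s *\<^sub>R d)) (at t within S)"
    by (auto intro!: derivative_eq_intros)
  have "((\<lambda>t. g (x + t *\<^sub>R d)) has_derivative (\<lambda>s. G (x + t *\<^sub>R d) \<bullet> (s *\<^sub>R d))) (at t within S)"
    using has_derivative_compose[OF 1 D[rule_format]] by simp
  moreover have "(\<lambda>s. G (x + t *\<^sub>R d) \<bullet> (s *\<^sub>R d)) = (*) (G (x + t *\<^sub>R d) \<bullet> d)"
    by (rule ext) (simp add: mult.commute)
  ultimately show ?thesis
    unfolding has_field_derivative_def by simp
qed

lemma lower_tangent: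
  fixes g :: "'a::real_inner \<Rightarrow> real"
  assumes C: "convex_on UNIV g" and D: "\<forall>v. (g has_derivative (\<lambda>h. G v \<bullet> h)) (at v)"
  shows "g y \<ge> g x + G x \<bullet> (y - x)"
proof -
  let ?h = "\<lambda>t. g (x + t *\<^sub>R (y - x))"
  have hc: "convex_on UNIV ?h"
  proof (rule convex_onI)
    fix t s :: real and a :: real assume a: "0 < a" "a < 1"
    show "?h ((1 - a) *\<^sub>R t + a *\<^sub>R s) \<le> (1 - a) * ?h t + a * ?h s"
    proof -
    have "x + ((1 - a) * t + a * s) *\<^sub>R (y - x) = (1 - a) *\<^sub>R (x + t *\<^sub>R (y - x)) + a *\<^sub>R (x + s *\<^sub>R (y - x))"
      by (simp add: algebra_simps)
    then show ?thesis
      using convex_onD[OF C, of a "x + t *\<^sub>R (y - x)" "x + s *\<^sub>R (y - x)"] a by simp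
    qed
  qed simp
  have "?h 1 - ?h 0 \<ge> (G (x + 0 *\<^sub>R (y - x)) \<bullet> (y - x)) * (1 - 0)"
    by (rule convex_on_imp_above_tangent[OF hc]) (use line_deriv[OF D, of x "y - x" 0 UNIV] in auto)
  then show ?thesis by simp
qed

lemma upper_quad:
  fixes g :: "'a::real_inner \<Rightarrow> real"
  assumes D: "\<forall>v. (g has_derivative (\<lambda>h. G v \<bullet> h)) (at v)"
    and Lip: "\<forall>u w. norm (G u - G w) \<le> L * norm (u - w)" and L: "L \<ge> 0"
  shows "g y \<le> g x + G x \<bullet> (y - x) + L * (norm (y - x))\<^sup>2"
proof -
  let ?h = "\<lambda>t. g (x + t *\<^sub>R (y - x))"
  obtain t where t: "t \<in> {0<..<1}" "?h 1 - ?h 0 = (1 - 0) * (G (x + t *\<^sub>R (y - x)) \<bullet> (y - x))"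
  proof -
    have "\<exists>t\<in>{0<..<1}. ?h 1 - ?h 0 = (\<lambda>t s. s * (G (x + t *\<^sub>R (y - x)) \<bullet> (y - x))) t (1 - 0)"
      by (rule mvt_simple) (auto intro!: line_deriv0[OF D])
    then show ?thesis using that by auto
  qed
  have "G (x + t *\<^sub>R (y - x)) \<bullet> (y - x) - G x \<bullet> (y - x) = (G (x + t *\<^sub>R (y - x)) - G x) \<bullet> (y - x)"
    by (simp add: inner_diff_left)
  also have "\<dots> \<le> norm (G (x + t *\<^sub>R (y - x)) - G x) * norm (y - x)"
    by (rule norm_cauchy_schwarz)
  also have "\<dots> \<le> (L * norm (t *\<^sub>R (y - x))) * norm (y - x)"
    using Lip[rule_format, of "x + t *\<^sub>R (y - x)" x] by (intro mult_right_mono) auto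
  also have "\<dots> \<le> L * (norm (y - x))\<^sup>2"
    using t(1) L by (simp add: power2_eq_square mult.assoc mult_left_mono mult_left_le_one_le)
  finally show ?thesis using t(2) by simp
qed

lemma cocoer_half:
  fixes g :: "'a::real_inner \<Rightarrow> real"
  assumes C: "convex_on UNIV g" and D: "\<forall>v. (g has_derivative (\<lambda>h. G v \<bullet> h)) (at v)"
    and Lip: "\<forall>u w. norm (G u - G w) \<le> L * norm (u - w)" and L: "L > 0"
  shows "g w + G w \<bullet> (u - w) + (norm (G u - G w))\<^sup>2 / (4 * L) \<le> g u"
proof -
  define t where "t = 1 / (2 * L)"
  define \<Delta> where "\<Delta> = G u - G w"
  have A: "g w + G w \<bullet> ((u - t *\<^sub>R \<Delta>) - w) \<le> g (u - t *\<^sub>R \<Delta>)"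
    by (rule lower_tangent[OF C D])
  have B: "g (u - t *\<^sub>R \<Delta>) \<le> g u + G u \<bullet> ((u - t *\<^sub>R \<Delta>) - u) + L * (norm ((u - t *\<^sub>R \<Delta>) - u))\<^sup>2"
    by (rule upper_quad[OF D Lip]) (use L in auto)
  have e1: "G w \<bullet> ((u - t *\<^sub>R \<Delta>) - w) = G w \<bullet> (u - w) - t * (G w \<bullet> \<Delta>)"
    by (simp add: inner_diff_right)
  have e2: "G u \<bullet> ((u - t *\<^sub>R \<Delta>) - u) = - t * (G u \<bullet> \<Delta>)"
    by simp
  have e3: "(norm ((u - t *\<^sub>R \<Delta>) - u))\<^sup>2 = t\<^sup>2 * (norm \<Delta>)\<^sup>2"
    by (simp add: power_mult_distrib)
  have e4: "G u \<bullet> \<Delta> - G w \<bullet> \<Delta> = (norm \<Delta>)\<^sup>2"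
    by (simp add: \<Delta>_def inner_diff_left power2_norm_eq_inner)
  have "g w + G w \<bullet> (u - w) \<le> g u - t * (norm \<Delta>)\<^sup>2 + L * t\<^sup>2 * (norm \<Delta>)\<^sup>2"
    using A B e1 e2 e3 e4 by (simp add: algebra_simps)
  moreover have eq: "t - L * t\<^sup>2 = 1 / (4 * L)"
    using L by (simp add: t_def field_simps power2_eq_square)
  moreover have "(1 / (4 * L)) * (norm \<Delta>)\<^sup>2 = t * (norm \<Delta>)\<^sup>2 - L * t\<^sup>2 * (norm \<Delta>)\<^sup>2"
    by (simp only: eq[symmetric] left_diff_distrib)
  ultimately have "g w + G w \<bullet> (u - w) \<le> g u - (1 / (4 * L)) * (norm \<Delta>)\<^sup>2"
    by linarith
  moreover have "(1 / (4 * L)) * (norm \<Delta>)\<^sup>2 = (norm \<Delta>)\<^sup>2 / (4 * L)" by simp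
  ultimately show ?thesis by (simp add: \<Delta>_def)
qed

lemma cocoercive:
  fixes g :: "'a::real_inner \<Rightarrow> real"
  assumes C: "convex_on UNIV g" and D: "\<forall>v. (g has_derivative (\<lambda>h. G v \<bullet> h)) (at v)"
    and Lip: "\<forall>u w. norm (G u - G w) \<le> L * norm (u - w)" and L: "L > 0"
  shows "(G u - G w) \<bullet> (u - w) \<ge> (norm (G u - G w))\<^sup>2 / (2 * L)"
proof -
  have 1: "g w + G w \<bullet> (u - w) + (norm (G u - G w))\<^sup>2 / (4 * L) \<le> g u"
    by (rule cocoer_half[OF C D Lip L])
  have 2: "g u + G u \<bullet> (w - u) + (norm (G w - G u))\<^sup>2 / (4 * L) \<le> g w"
    by (rule cocoer_half[OF C D Lip L])
  have 3: "norm (G w - G u) = norm (G u - G w)" by (rule norm_minus_commute)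
  have 4: "(G u - G w) \<bullet> (u - w) = - (G w \<bullet> (u - w)) - G u \<bullet> (w - u)"
    by (simp add: inner_diff_left inner_diff_right)
  have "(norm (G u - G w))\<^sup>2 / (2 * L) = (norm (G u - G w))\<^sup>2 / (4 * L) + (norm (G u - G w))\<^sup>2 / (4 * L)"
    by (simp add: field_simps)
  then show ?thesis using 1 2[unfolded 3] 4 by linarith
qed

lemma gd_nonexp:
  fixes g :: "'a::real_inner \<Rightarrow> real"
  assumes C: "convex_on UNIV g" and D: "\<forall>v. (g has_derivative (\<lambda>h. G v \<bullet> h)) (at v)"
    and Lip: "\<forall>u w. norm (G u - G w) \<le> L * norm (u - w)" and L: "L > 0"
    and gam: "\<gamma> > 0" "\<gamma> * L \<le> 1"
  shows "norm (G (w - \<gamma> *\<^sub>R G w)) \<le> norm (G w)"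
proof -
  define \<Delta> where "\<Delta> = G w - G (w - \<gamma> *\<^sub>R G w)"
  have c: "\<Delta> \<bullet> (\<gamma> *\<^sub>R G w) \<ge> (norm \<Delta>)\<^sup>2 / (2 * L)"
    using cocoercive[OF C D Lip L, of w "w - \<gamma> *\<^sub>R G w"] by (simp add: \<Delta>_def)
  have "(norm \<Delta>)\<^sup>2 / (2 * L) \<ge> \<gamma> * (norm \<Delta>)\<^sup>2 / 2"
  proof -
    have "\<gamma> * (norm \<Delta>)\<^sup>2 / 2 = (\<gamma> * L) * (norm \<Delta>)\<^sup>2 / (2 * L)" using L by simp
    also have "\<dots> \<le> (norm \<Delta>)\<^sup>2 / (2 * L)"
      using gam L by (intro divide_right_mono mult_left_le_one_le) auto
    finally show ?thesis .
  qed
  hence "\<gamma> * (\<Delta> \<bullet> G w) \<ge> \<gamma> * ((norm \<Delta>)\<^sup>2 / 2)" using c by simp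
  hence "\<Delta> \<bullet> G w \<ge> (norm \<Delta>)\<^sup>2 / 2" using gam(1) by (simp add: mult_le_cancel_left_pos)
  moreover have "(norm (G (w - \<gamma> *\<^sub>R G w)))\<^sup>2 = (norm (G w))\<^sup>2 - 2 * (\<Delta> \<bullet> G w) + (norm \<Delta>)\<^sup>2"
  proof -
    have "G (w - \<gamma> *\<^sub>R G w) = G w - \<Delta>" by (simp add: \<Delta>_def)
    then show ?thesis
      by (simp add: power2_norm_eq_inner inner_diff_left inner_diff_right inner_commute)
  qed
  ultimately have "(norm (G (w - \<gamma> *\<^sub>R G w)))\<^sup>2 \<le> (norm (G w))\<^sup>2" by linarith
  then show ?thesis using power2_le_imp_le by (metis norm_ge_zero)
qed



lemma coef:
  fixes \<mu> ell \<gamma> T Lm :: real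
  assumes mu: "\<mu> > 0" and ml: "\<mu> \<le> ell" and g: "\<gamma> > 0" and T: "T \<ge> 1" and Lm: "Lm > 0"
    and step: "\<gamma> * (ell * T + 2 * (T - 1) * Lm * sqrt (ell / \<mu>)) \<le> 1"
  shows "2 * \<gamma> * T - \<gamma>\<^sup>2 * T\<^sup>2 * ell - 2 * \<gamma> * (Lm * \<gamma> * T * (T - 1) / 2) * sqrt (ell / \<mu>)
           - \<gamma>\<^sup>2 * (Lm * \<gamma> * T * (T - 1) / 2)\<^sup>2 * ell
         \<ge> \<gamma> * T * (2 - \<gamma> * ell * T - 2 * (T - 1) * \<gamma> * Lm * sqrt (ell / \<mu> / 3))"
proof -
  define q3 where "q3 = sqrt (ell / \<mu> / 3)"
  define s3 where "s3 = sqrt (3::real)"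
  have s3sq: "s3\<^sup>2 = 3" by (simp add: s3_def)
  have s3pos: "s3 > 0" by (simp add: s3_def)
  have s3lo: "s3 \<ge> 27/16"
    unfolding s3_def by (rule real_le_rsqrt) (simp add: power2_eq_square)
  have q: "sqrt (ell / \<mu>) = s3 * q3"
    unfolding s3_def q3_def by (simp flip: real_sqrt_mult)
  have q3sq: "q3\<^sup>2 = ell / \<mu> / 3" unfolding q3_def using mu ml by simp
  have "ell / \<mu> \<ge> 1" using mu ml by simp
  hence q3lo: "q3\<^sup>2 \<ge> 1/3" using q3sq by simp
  have q3pos: "q3 > 0" unfolding q3_def using mu ml by simp
  define A where "A = \<gamma> * ell * T"
  define B where "B = \<gamma> * Lm * (T - 1)"
  have A0: "A \<ge> 0" "B \<ge> 0" unfolding A_def B_def using g mu ml T Lm by auto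
  have AB1: "A + B * (2 * s3 * q3) \<le> 1"
    using step unfolding A_def B_def q by (simp add: algebra_simps)
  have A1: "A \<le> 1" using AB1 A0 s3pos q3pos by (smt (verit) mult_nonneg_nonneg)
  have Bq: "B * (2 * s3 * q3) \<le> 1" using AB1 A0 by linarith
  have big: "(2 * s3 * q3) * (4 * (2 - s3) * q3) \<ge> 1"
  proof -
    have "(2 * s3 * q3) * (4 * (2 - s3) * q3) = 8 * (2 * s3 - s3\<^sup>2) * q3\<^sup>2"
      by (simp add: algebra_simps power2_eq_square)
    also have "\<dots> = 8 * (2 * s3 - 3) * q3\<^sup>2" using s3sq by simp
    also have "\<dots> \<ge> 8 * (2 * s3 - 3) * (1/3)"
      using q3lo s3lo by (intro mult_left_mono) auto
    finally have "8 * (2 * s3 - 3) * (1/3) \<le> (2 * s3 * q3) * (4 * (2 - s3) * q3)" .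
    moreover have "8 * (2 * s3 - 3) * (1/3) \<ge> 1" using s3lo by (simp add: field_simps)
    ultimately show ?thesis by linarith
  qed
  have Bb: "B \<le> 4 * (2 - s3) * q3"
  proof -
    have "B * (2 * s3 * q3) \<le> (4 * (2 - s3) * q3) * (2 * s3 * q3)"
      using Bq big by (simp only: mult.commute[of "4 * (2 - s3) * q3"])
    then show ?thesis using s3pos q3pos by (simp add: mult_le_cancel_right)
  qed
  have key: "A * B / 4 \<le> (2 - s3) * q3"
  proof -
    have "A * B \<le> B" using A1 A0 by (simp add: mult_left_le_one_le)
    moreover have "4 * (2 - s3) * q3 = 4 * ((2 - s3) * q3)" by simp
    ultimately show ?thesis using Bb by linarith
  qed
  define K where "K = \<gamma>\<^sup>2 * T * (T - 1) * Lm"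
  have K0: "K \<ge> 0" unfolding K_def using T Lm by simp
  have "2 * \<gamma> * T - \<gamma>\<^sup>2 * T\<^sup>2 * ell - 2 * \<gamma> * (Lm * \<gamma> * T * (T - 1) / 2) * sqrt (ell / \<mu>)
           - \<gamma>\<^sup>2 * (Lm * \<gamma> * T * (T - 1) / 2)\<^sup>2 * ell
         - \<gamma> * T * (2 - \<gamma> * ell * T - 2 * (T - 1) * \<gamma> * Lm * sqrt (ell / \<mu> / 3))
       = K * (2 * q3 - s3 * q3 - A * B / 4)"
    unfolding K_def A_def B_def q q3_def[symmetric] by (simp add: field_simps power2_eq_square)
  moreover have "K * (2 * q3 - s3 * q3 - A * B / 4) \<ge> 0"
    using K0 key by (intro mult_nonneg_nonneg) (auto simp: algebra_simps)
  ultimately show ?thesis by linarith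
qed

lemma round_alg:
  fixes r F E :: "'a::real_inner" and \<mu> ell \<gamma> T Lm :: real
  assumes mu: "\<mu> > 0" and ml: "\<mu> \<le> ell" and g: "\<gamma> > 0" and T: "T \<ge> 1" and Lm: "Lm > 0"
    and step: "\<gamma> * (ell * T + 2 * (T - 1) * Lm * sqrt (ell / \<mu>)) \<le> 1"
    and sF: "F \<bullet> r \<ge> \<mu> * (norm r)\<^sup>2" and aF: "(norm F)\<^sup>2 \<le> ell * (F \<bullet> r)"
    and EB: "norm E \<le> (Lm * \<gamma> * T * (T - 1) / 2) * norm F"
  shows "(norm (r - (\<gamma> * T) *\<^sub>R F - \<gamma> *\<^sub>R E))\<^sup>2
         \<le> (1 - \<gamma> * T * \<mu> * (2 - \<gamma> * ell * T - 2 * (T - 1) * \<gamma> * Lm * sqrt (ell / \<mu> / 3))) * (norm r)\<^sup>2"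
proof -
  define s where "s = F \<bullet> r"
  define a where "a = norm F"
  define \<rho> where "\<rho> = norm r"
  define \<beta> where "\<beta> = Lm * \<gamma> * T * (T - 1) / 2"
  define q where "q = sqrt (ell / \<mu>)"
  define u where "u = r - (\<gamma> * T) *\<^sub>R F"
  have ell: "ell > 0" using mu ml by simp
  have "\<mu> * (norm r)\<^sup>2 \<ge> 0" using mu by simp
  hence s0: "s \<ge> 0" using sF unfolding s_def by linarith
  have a0: "a \<ge> 0" "\<rho> \<ge> 0" unfolding a_def \<rho>_def by auto
  have b0: "\<beta> \<ge> 0" unfolding \<beta>_def using Lm g T by simp
  have q0: "q \<ge> 0" unfolding q_def using mu ml by simp
  have A1: "\<gamma> * ell * T \<le> 1"
  proof -
    have "0 \<le> \<gamma> * (2 * (T - 1) * Lm * sqrt (ell / \<mu>))" using g T Lm q0 unfolding q_def[symmetric] by simp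
    then show ?thesis using step by (simp add: algebra_simps)
  qed
  have un: "(norm u)\<^sup>2 = \<rho>\<^sup>2 - 2 * (\<gamma> * T) * s + (\<gamma> * T)\<^sup>2 * a\<^sup>2"
  proof -
    have "(norm u)\<^sup>2 = u \<bullet> u" by (simp add: power2_norm_eq_inner)
    also have "\<dots> = r \<bullet> r - 2 * (\<gamma> * T) * (F \<bullet> r) + (\<gamma> * T)\<^sup>2 * (F \<bullet> F)"
      unfolding u_def by (simp add: inner_diff_left inner_diff_right inner_commute power2_eq_square algebra_simps)
    also have "\<dots> = \<rho>\<^sup>2 - 2 * (\<gamma> * T) * s + (\<gamma> * T)\<^sup>2 * a\<^sup>2"
      by (simp add: \<rho>_def s_def a_def power2_norm_eq_inner)
    finally show ?thesis .
  qed
  have aF': "a\<^sup>2 \<le> ell * s" using aF unfolding a_def s_def .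
  have "(\<gamma> * T)\<^sup>2 * a\<^sup>2 \<le> (\<gamma> * T)\<^sup>2 * (ell * s)"
    using aF' by (rule mult_left_mono) simp
  hence un2: "(norm u)\<^sup>2 \<le> \<rho>\<^sup>2 - 2 * (\<gamma> * T) * s + (\<gamma> * T)\<^sup>2 * (ell * s)"
    using un by linarith
  have "(\<gamma> * T)\<^sup>2 * (ell * s) \<le> (\<gamma> * T) * s"
  proof -
    have "(\<gamma> * T)\<^sup>2 * (ell * s) = (\<gamma> * T) * s * (\<gamma> * ell * T)" by (simp add: power2_eq_square algebra_simps)
    also have "\<dots> \<le> (\<gamma> * T) * s"
      by (rule mult_left_le[OF A1]) (use s0 g T in simp)
    finally show ?thesis .
  qed
  moreover have "(\<gamma> * T) * s \<ge> 0" using s0 g T by simp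
  ultimately have "(norm u)\<^sup>2 \<le> \<rho>\<^sup>2" using un2 by linarith
  hence nu: "norm u \<le> \<rho>" by (rule power2_le_imp_le) (rule a0(2))
  have aq: "a * \<rho> \<le> q * s"
  proof -
    have "\<mu> * \<rho>\<^sup>2 \<le> s" using sF unfolding s_def \<rho>_def .
    hence r2: "\<rho>\<^sup>2 \<le> s / \<mu>" using mu by (simp add: field_simps)
    have "(a * \<rho>)\<^sup>2 = a\<^sup>2 * \<rho>\<^sup>2" by (simp add: power_mult_distrib)
    also have "\<dots> \<le> (ell * s) * (s / \<mu>)"
      by (rule mult_mono[OF aF' r2]) (use s0 ell in simp_all)
    also have "\<dots> = (q * s)\<^sup>2"
    proof -
      have qsq: "q\<^sup>2 = ell / \<mu>" unfolding q_def using ell mu by simp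
      have "(q * s)\<^sup>2 = q\<^sup>2 * s\<^sup>2" by (simp add: power_mult_distrib)
      then show ?thesis unfolding qsq by (simp add: power2_eq_square)
    qed
    finally have "(a * \<rho>)\<^sup>2 \<le> (q * s)\<^sup>2" .
    then show ?thesis by (rule power2_le_imp_le) (use q0 s0 in simp)
  qed
  have nE: "norm E \<le> \<beta> * a" using EB unfolding \<beta>_def a_def .
  have "norm (r - (\<gamma> * T) *\<^sub>R F - \<gamma> *\<^sub>R E) \<le> norm u + \<gamma> * (\<beta> * a)"
  proof -
    have "norm (r - (\<gamma> * T) *\<^sub>R F - \<gamma> *\<^sub>R E) \<le> norm u + norm (\<gamma> *\<^sub>R E)"
      unfolding u_def by (rule norm_triangle_ineq4)
    also have "norm (\<gamma> *\<^sub>R E) \<le> \<gamma> * (\<beta> * a)" using nE g by simp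
    finally show ?thesis by simp
  qed
  hence "(norm (r - (\<gamma> * T) *\<^sub>R F - \<gamma> *\<^sub>R E))\<^sup>2 \<le> (norm u + \<gamma> * (\<beta> * a))\<^sup>2"
    by (rule power_mono) simp
  also have "\<dots> = (norm u)\<^sup>2 + 2 * \<gamma> * \<beta> * (a * norm u) + \<gamma>\<^sup>2 * \<beta>\<^sup>2 * a\<^sup>2"
    by (simp add: power2_eq_square algebra_simps)
  also have "\<dots> \<le> (\<rho>\<^sup>2 - 2 * (\<gamma> * T) * s + (\<gamma> * T)\<^sup>2 * (ell * s)) + 2 * \<gamma> * \<beta> * (q * s) + \<gamma>\<^sup>2 * \<beta>\<^sup>2 * (ell * s)"
  proof -
    have "a * norm u \<le> a * \<rho>" using nu a0 by (simp add: mult_left_mono)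
    hence "a * norm u \<le> q * s" using aq by linarith
    hence "2 * \<gamma> * \<beta> * (a * norm u) \<le> 2 * \<gamma> * \<beta> * (q * s)" using g b0 by (simp add: mult_left_mono)
    moreover have "\<gamma>\<^sup>2 * \<beta>\<^sup>2 * a\<^sup>2 \<le> \<gamma>\<^sup>2 * \<beta>\<^sup>2 * (ell * s)"
      using aF' by (rule mult_left_mono) simp
    ultimately show ?thesis using un2 by linarith
  qed
  also have "\<dots> = \<rho>\<^sup>2 - s * (2 * \<gamma> * T - \<gamma>\<^sup>2 * T\<^sup>2 * ell - 2 * \<gamma> * \<beta> * q - \<gamma>\<^sup>2 * \<beta>\<^sup>2 * ell)"
    by (simp add: power2_eq_square algebra_simps)
  also have "\<dots> \<le> \<rho>\<^sup>2 - (\<mu> * \<rho>\<^sup>2) * (\<gamma> * T * (2 - \<gamma> * ell * T - 2 * (T - 1) * \<gamma> * Lm * sqrt (ell / \<mu> / 3)))"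
  proof -
    have c: "2 * \<gamma> * T - \<gamma>\<^sup>2 * T\<^sup>2 * ell - 2 * \<gamma> * \<beta> * q - \<gamma>\<^sup>2 * \<beta>\<^sup>2 * ell
         \<ge> \<gamma> * T * (2 - \<gamma> * ell * T - 2 * (T - 1) * \<gamma> * Lm * sqrt (ell / \<mu> / 3))"
      using coef[OF mu ml g T Lm step] unfolding \<beta>_def q_def by simp
    have z: "2 - \<gamma> * ell * T - 2 * (T - 1) * \<gamma> * Lm * sqrt (ell / \<mu> / 3) \<ge> 0"
    proof -
      have "sqrt (ell / \<mu> / 3) \<le> sqrt (ell / \<mu>)" using ell mu by (simp add: real_sqrt_le_iff divide_le_cancel field_simps)
      hence "2 * (T - 1) * \<gamma> * Lm * sqrt (ell / \<mu> / 3) \<le> 2 * (T - 1) * \<gamma> * Lm * sqrt (ell / \<mu>)"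
        using T g Lm by (intro mult_left_mono) auto
      moreover have "\<gamma> * ell * T + \<gamma> * (2 * (T - 1) * Lm * sqrt (ell / \<mu>)) \<le> 1"
        using step by (simp add: algebra_simps)
      ultimately show ?thesis by (simp add: algebra_simps)
    qed
    have "(\<mu> * \<rho>\<^sup>2) * (\<gamma> * T * (2 - \<gamma> * ell * T - 2 * (T - 1) * \<gamma> * Lm * sqrt (ell / \<mu> / 3)))
       \<le> s * (\<gamma> * T * (2 - \<gamma> * ell * T - 2 * (T - 1) * \<gamma> * Lm * sqrt (ell / \<mu> / 3)))"
      by (rule mult_right_mono) (use sF z g T in \<open>simp_all add: s_def \<rho>_def\<close>)
    also have "\<dots> \<le> s * (2 * \<gamma> * T - \<gamma>\<^sup>2 * T\<^sup>2 * ell - 2 * \<gamma> * \<beta> * q - \<gamma>\<^sup>2 * \<beta>\<^sup>2 * ell)"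
      using c s0 by (rule mult_left_mono)
    finally show ?thesis by linarith
  qed
  also have "\<dots> = (1 - \<gamma> * T * \<mu> * (2 - \<gamma> * ell * T - 2 * (T - 1) * \<gamma> * Lm * sqrt (ell / \<mu> / 3))) * (norm r)\<^sup>2"
    unfolding \<rho>_def by (simp add: algebra_simps)
  finally show ?thesis .
qed



lemma proj_nth [simp]: "proj blk i v $ c = (if blk c = i then v $ c else 0)"
  by (simp add: proj_def)
lemma proj_add: "proj blk i (u + v) = proj blk i u + proj blk i v" by (simp add: vec_eq_iff)
lemma proj_diff: "proj blk i (u - v) = proj blk i u - proj blk i v" by (simp add: vec_eq_iff)
lemma proj_scale: "proj blk i (a *\<^sub>R v) = a *\<^sub>R proj blk i v" by (simp add: vec_eq_iff)
lemma proj_zero [simp]: "proj blk i 0 = 0" by (simp add: vec_eq_iff)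
lemma proj_proj [simp]: "proj blk i (proj blk i v) = proj blk i v" by (simp add: vec_eq_iff)
lemma linear_proj: "linear (proj blk i)"
  by (rule linearI) (simp_all add: proj_add proj_scale)
lemma norm_proj_le: "norm (proj blk i v) \<le> norm v"
  by (rule norm_le_componentwise_cart) simp

lemma norm_decomp:
  fixes v :: "real^'c::finite"
  assumes "\<forall>c. blk c < n"
  shows "(norm v)\<^sup>2 = (\<Sum>i<n. (norm (proj blk i v))\<^sup>2)"
proof -
  have nsq: "\<And>w::real^'c. (norm w)\<^sup>2 = (\<Sum>c\<in>UNIV. (w $ c)\<^sup>2)"
    unfolding power2_norm_eq_inner inner_vec_def by (simp add: power2_eq_square)
  have "(\<Sum>i<n. (norm (proj blk i v))\<^sup>2) = (\<Sum>i<n. \<Sum>c\<in>UNIV. (if blk c = i then (v $ c)\<^sup>2 else 0))"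
    by (simp add: nsq) (rule sum.cong, simp, rule sum.cong, auto)
  also have "\<dots> = (\<Sum>c\<in>UNIV. \<Sum>i<n. (if blk c = i then (v $ c)\<^sup>2 else 0))"
    by (rule sum.swap)
  also have "\<dots> = (\<Sum>c\<in>UNIV. (v $ c)\<^sup>2)"
    using assms by (simp add: sum.delta')
  finally show ?thesis by (simp add: nsq)
qed

lemma grad_proj:
  fixes \<phi> :: "real^'c::finite \<Rightarrow> real"
  assumes "GDERIV (\<lambda>v. \<phi> (x + proj blk i v)) 0 :> D"
  shows "proj blk i D = D"
proof -
  let ?\<psi> = "\<lambda>v. \<phi> (x + proj blk i v)"
  have d1: "(?\<psi> has_derivative (\<lambda>h. h \<bullet> D)) (at 0)" using assms by (simp add: gderiv_def)
  have lp: "(proj blk i has_derivative proj blk i) (at 0)"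
    by (rule linear_imp_has_derivative[OF linear_proj])
  have "((\<lambda>v. ?\<psi> (proj blk i v)) has_derivative (\<lambda>h. proj blk i h \<bullet> D)) (at 0)"
    using has_derivative_compose[OF lp, of ?\<psi> "\<lambda>h. h \<bullet> D"] d1 by simp
  moreover have "(\<lambda>v. ?\<psi> (proj blk i v)) = ?\<psi>" by simp
  ultimately have "(?\<psi> has_derivative (\<lambda>h. proj blk i h \<bullet> D)) (at 0)" by simp
  hence eq: "(\<lambda>h. h \<bullet> D) = (\<lambda>h. proj blk i h \<bullet> D)"
    using d1 has_derivative_unique by blast
  show ?thesis
  unfolding vec_eq_iff
  proof
    fix c
    show "proj blk i D $ c = D $ c"
    proof (cases "blk c = i")
      case False
      have "proj blk i (axis c 1) = 0" using False by (simp add: vec_eq_iff axis_def)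
      hence "axis c 1 \<bullet> D = 0" using fun_cong[OF eq, of "axis c 1"] by simp
      hence "D $ c = 0" by (simp add: inner_axis')
      then show ?thesis by simp
    qed simp
  qed
qed

lemma block_deriv:
  fixes \<phi> :: "real^'c::finite \<Rightarrow> real"
  assumes "\<forall>x. GDERIV (\<lambda>v. \<phi> (x + proj blk i v)) 0 :> gr x"
  shows "((\<lambda>v. \<phi> (y + proj blk i v)) has_derivative (\<lambda>h. gr (y + proj blk i v) \<bullet> h)) (at v)"
proof -
  define x' where "x' = y + proj blk i v"
  have d: "((\<lambda>h. \<phi> (x' + proj blk i h)) has_derivative (\<lambda>h. h \<bullet> gr x')) (at 0)"
    using assms by (simp add: gderiv_def)
  have sh: "((\<lambda>w. w - v) has_derivative (\<lambda>h. h)) (at v)"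
    by (auto intro!: derivative_eq_intros)
  have "((\<lambda>w. \<phi> (x' + proj blk i (w - v))) has_derivative (\<lambda>h. h \<bullet> gr x')) (at v)"
    using has_derivative_compose[OF sh, of "\<lambda>h. \<phi> (x' + proj blk i h)" "\<lambda>h. h \<bullet> gr x'"] d by simp
  moreover have "(\<lambda>w. \<phi> (x' + proj blk i (w - v))) = (\<lambda>w. \<phi> (y + proj blk i w))"
    by (rule ext) (simp add: x'_def proj_diff)
  moreover have "(\<lambda>h. h \<bullet> gr x') = (\<lambda>h. gr x' \<bullet> h)" by (rule ext) (simp add: inner_commute)
  ultimately show ?thesis by (simp add: x'_def)
qed



lemma sum_real_lt: "(\<Sum>j<m. real j) = real m * (real m - 1) / 2"
  by (induction m) (simp_all add: field_simps)

locale pearl_setting =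
  fixes n :: nat and blk :: "'c::finite \<Rightarrow> nat"
    and f :: "nat \<Rightarrow> real^'c \<Rightarrow> real" and grad :: "nat \<Rightarrow> real^'c \<Rightarrow> real^'c"
    and L :: "nat \<Rightarrow> real" and \<mu> ell \<gamma> :: real and \<tau> :: nat and xs :: "real^'c"
  assumes n: "n \<ge> 1"
    and blk_range: "\<forall>c. blk c < n"
    and grad: "\<forall>i<n. \<forall>x. GDERIV (\<lambda>v. f i (x + proj blk i v)) 0 :> grad i x"
    and CVX: "\<forall>i<n. \<forall>x. convex_on UNIV (\<lambda>v. f i (x + proj blk i v))"
    and SM: "\<forall>i<n. L i > 0 \<and> (\<forall>x u w. norm (grad i (x + proj blk i u) - grad i (x + proj blk i w))
                 \<le> L i * norm (proj blk i u - proj blk i w))"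
    and QSM_mu: "\<mu> > 0"
    and QSM: "\<forall>x. inner (joint_grad grad blk x) (x - xs) \<ge> \<mu> * (norm (x - xs))\<^sup>2"
    and SCO_l: "ell > 0"
    and SCO: "\<forall>x. inner (joint_grad grad blk x) (x - xs) \<ge> (1 / ell) * (norm (joint_grad grad blk x))\<^sup>2"
    and tau: "\<tau> \<ge> 1"
    and gamma_pos: "\<gamma> > 0"
    and gamma_le: "\<gamma> \<le> 1 / (ell * real \<tau> + 2 * (real \<tau> - 1) * Max (L ` {..<n}) * sqrt (ell / \<mu>))"
begin

definition Lm where "Lm = Max (L ` {..<n})"

lemma L_le: "i < n \<Longrightarrow> L i \<le> Lm"
  unfolding Lm_def by (intro Max_ge) auto

lemma Lm_pos: "Lm > 0"
proof -
  have "0 < n" using n by simp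
  then have "L 0 > 0" "L 0 \<le> Lm" using SM L_le by auto
  then show ?thesis by linarith
qed

lemma mu_le: "\<mu> \<le> ell"
proof -
  define r :: "real^'c" where "r = (\<chi> c. 1)"
  define F where "F = joint_grad grad blk (xs + r)"
  have rnz: "r \<noteq> 0" unfolding r_def by (simp add: vec_eq_iff)
  define \<rho> where "\<rho> = norm r"
  have rho: "\<rho> > 0" using rnz unfolding \<rho>_def by simp
  define s where "s = F \<bullet> r"
  have s1: "s \<ge> \<mu> * \<rho>\<^sup>2" using QSM[rule_format, of "xs + r"] unfolding s_def F_def \<rho>_def by simp
  have s2: "(1 / ell) * (norm F)\<^sup>2 \<le> s" using SCO[rule_format, of "xs + r"] unfolding s_def F_def by simp
  have s3: "s \<le> norm F * \<rho>" unfolding s_def \<rho>_def by (rule norm_cauchy_schwarz)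
  have sp: "s > 0" using s1 rho QSM_mu by (smt (verit) mult_pos_pos zero_less_power)
  have a2: "(norm F)\<^sup>2 \<le> ell * s"
  proof -
    have "(norm F)\<^sup>2 = ell * ((1 / ell) * (norm F)\<^sup>2)" using SCO_l by simp
    also have "\<dots> \<le> ell * s" using s2 SCO_l by (intro mult_left_mono) auto
    finally show ?thesis .
  qed
  have "s * s \<le> (norm F)\<^sup>2 * \<rho>\<^sup>2"
  proof -
    have "s * s \<le> (norm F * \<rho>) * (norm F * \<rho>)" using s3 sp by (intro mult_mono) auto
    then show ?thesis by (simp add: power2_eq_square algebra_simps)
  qed
  also have "\<dots> \<le> (ell * s) * \<rho>\<^sup>2" using a2 by (intro mult_right_mono) auto
  finally have "s \<le> ell * \<rho>\<^sup>2" using sp by (simp add: algebra_simps mult_le_cancel_left_pos)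
  hence "\<mu> * \<rho>\<^sup>2 \<le> ell * \<rho>\<^sup>2" using s1 by linarith
  then show ?thesis using rho by simp
qed

lemma step: "\<gamma> * (ell * real \<tau> + 2 * (real \<tau> - 1) * Lm * sqrt (ell / \<mu>)) \<le> 1"
proof -
  have "ell * real \<tau> + 2 * (real \<tau> - 1) * Lm * sqrt (ell / \<mu>) > 0"
  proof -
    have "ell * real \<tau> > 0" using SCO_l tau by simp
    moreover have "2 * (real \<tau> - 1) * Lm * sqrt (ell / \<mu>) \<ge> 0"
      using tau Lm_pos SCO_l QSM_mu by simp
    ultimately show ?thesis by linarith
  qed
  then show ?thesis using gamma_le unfolding Lm_def[symmetric] by (simp add: le_divide_eq mult.commute)
qed

lemma gLm: assumes "\<tau> \<ge> 2" shows "\<gamma> * Lm \<le> 1"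
proof -
  have q: "sqrt (ell / \<mu>) \<ge> 1" using mu_le QSM_mu by simp
  have "\<gamma> * Lm \<le> \<gamma> * (2 * (real \<tau> - 1) * Lm * sqrt (ell / \<mu>))"
  proof -
    have "1 \<le> 2 * (real \<tau> - 1) * sqrt (ell / \<mu>)"
    proof -
      have "1 \<le> 2 * (real \<tau> - 1)" using assms by simp
      also have "\<dots> \<le> 2 * (real \<tau> - 1) * sqrt (ell / \<mu>)" using q assms by simp
      finally show ?thesis .
    qed
    then have "Lm \<le> (2 * (real \<tau> - 1) * sqrt (ell / \<mu>)) * Lm" using Lm_pos by simp
    then have "\<gamma> * Lm \<le> \<gamma> * ((2 * (real \<tau> - 1) * sqrt (ell / \<mu>)) * Lm)"
      using gamma_pos by (intro mult_left_mono) auto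
    then show ?thesis by (simp add: ac_simps)
  qed
  also have "\<dots> \<le> 1"
  proof -
    have "0 \<le> \<gamma> * (ell * real \<tau>)" using gamma_pos SCO_l by simp
    then show ?thesis using step by (simp add: algebra_simps)
  qed
  finally show ?thesis .
qed

lemma grad_proj_i: "i < n \<Longrightarrow> proj blk i (grad i x) = grad i x"
  using grad by (intro grad_proj[where \<phi>="f i"]) auto

lemma grad_zero: "i < n \<Longrightarrow> blk c \<noteq> i \<Longrightarrow> grad i x $ c = 0"
  using grad_proj_i[of i x] by (metis proj_nth)

definition zz where "zz y k = (local_step grad blk \<gamma> y ^^ k) y"
definition HH where "HH y k = (\<chi> c. grad (blk c) (y + proj blk (blk c) (zz y k - y)) $ c)"

lemma zz_0 [simp]: "zz y 0 = y" by (simp add: zz_def)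
lemma zz_Suc: "zz y (Suc k) = zz y k - \<gamma> *\<^sub>R HH y k"
  by (simp add: zz_def HH_def local_step_def vec_eq_iff)

lemma proj_HH: "i < n \<Longrightarrow> proj blk i (HH y k) = grad i (y + proj blk i (zz y k - y))"
  unfolding vec_eq_iff
proof
  fix c assume i: "i < n"
  show "proj blk i (HH y k) $ c = grad i (y + proj blk i (zz y k - y)) $ c"
    by (cases "blk c = i") (simp_all add: HH_def grad_zero[OF i])
qed

lemma HH_0: "HH y 0 = joint_grad grad blk y"
  by (simp add: HH_def joint_grad_def)

lemma proj_F: "i < n \<Longrightarrow> proj blk i (joint_grad grad blk y) = grad i y"
  using proj_HH[of i y 0] by (simp add: HH_0)

lemma conv_i: "i < n \<Longrightarrow> convex_on UNIV (\<lambda>v. f i (y + proj blk i v))"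
  using CVX by auto

lemma deriv_i: "i < n \<Longrightarrow> \<forall>v. ((\<lambda>v. f i (y + proj blk i v)) has_derivative (\<lambda>h. grad i (y + proj blk i v) \<bullet> h)) (at v)"
  using grad by (intro allI block_deriv) auto

lemma lip_i: "i < n \<Longrightarrow> \<forall>u w. norm (grad i (y + proj blk i u) - grad i (y + proj blk i w)) \<le> L i * norm (u - w)"
proof (intro allI)
  fix u w assume i: "i < n"
  have "norm (grad i (y + proj blk i u) - grad i (y + proj blk i w)) \<le> L i * norm (proj blk i u - proj blk i w)"
    using SM i by blast
  also have "\<dots> \<le> L i * norm (u - w)"
    using SM i norm_proj_le[of blk i "u - w"] by (simp add: proj_diff)
  finally show "norm (grad i (y + proj blk i u) - grad i (y + proj blk i w)) \<le> L i * norm (u - w)" .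
qed

lemma nonexp:
  assumes i: "i < n" and gl: "\<gamma> * Lm \<le> 1"
  shows "norm (grad i (y + proj blk i (zz y k - y))) \<le> norm (grad i y)
       \<and> norm (proj blk i (zz y k - y)) \<le> \<gamma> * real k * norm (grad i y)"
proof (induction k)
  case 0 then show ?case by simp
next
  case (Suc k)
  define w where "w = proj blk i (zz y k - y)"
  let ?G = "\<lambda>v. grad i (y + proj blk i v)"
  have wS: "proj blk i (zz y (Suc k) - y) = w - \<gamma> *\<^sub>R ?G w"
  proof -
    have "zz y (Suc k) - y = (zz y k - y) - \<gamma> *\<^sub>R HH y k" by (simp add: zz_Suc algebra_simps)
    then have "proj blk i (zz y (Suc k) - y) = w - \<gamma> *\<^sub>R proj blk i (HH y k)"
      unfolding w_def by (simp add: proj_diff proj_scale)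
    also have "proj blk i (HH y k) = ?G w" unfolding proj_HH[OF i] w_def by simp
    finally show ?thesis .
  qed
  have Li: "L i > 0" using SM i by blast
  have gi: "\<gamma> * L i \<le> 1"
  proof -
    have "\<gamma> * L i \<le> \<gamma> * Lm" using L_le[OF i] gamma_pos by simp
    then show ?thesis using gl by linarith
  qed
  have ne: "norm (?G (w - \<gamma> *\<^sub>R ?G w)) \<le> norm (?G w)"
    by (rule gd_nonexp[OF conv_i[OF i] deriv_i[OF i] lip_i[OF i] Li gamma_pos gi])
  have IH1: "norm (?G w) \<le> norm (grad i y)" using Suc.IH unfolding w_def by simp
  have IH2: "norm w \<le> \<gamma> * real k * norm (grad i y)" using Suc.IH unfolding w_def by simp
  have p: "proj blk i (w - \<gamma> *\<^sub>R ?G w) = w - \<gamma> *\<^sub>R ?G w"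
    unfolding wS[symmetric] by simp
  have "norm (?G (proj blk i (zz y (Suc k) - y))) \<le> norm (grad i y)"
    using ne IH1 unfolding wS by simp
  moreover have "norm (proj blk i (zz y (Suc k) - y)) \<le> \<gamma> * real (Suc k) * norm (grad i y)"
  proof -
    have "norm (w - \<gamma> *\<^sub>R ?G w) \<le> norm w + norm (\<gamma> *\<^sub>R ?G w)" by (rule norm_triangle_ineq4)
    also have "norm (\<gamma> *\<^sub>R ?G w) = \<gamma> * norm (?G w)" using gamma_pos by simp
    also have "\<gamma> * norm (?G w) \<le> \<gamma> * norm (grad i y)" using IH1 gamma_pos by simp
    finally show ?thesis using IH2 unfolding wS by (simp add: algebra_simps)
  qed
  ultimately show ?case by simp
qed

lemma Hdiff:
  assumes k: "k < \<tau>"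
  shows "norm (HH y k - HH y 0) \<le> Lm * \<gamma> * real k * norm (joint_grad grad blk y)"
proof (cases "k = 0")
  case True then show ?thesis by simp
next
  case False
  then have "\<tau> \<ge> 2" using k by simp
  then have gl: "\<gamma> * Lm \<le> 1" by (rule gLm)
  define F where "F = joint_grad grad blk y"
  define c where "c = Lm * \<gamma> * real k"
  have c0: "c \<ge> 0" unfolding c_def using Lm_pos gamma_pos by simp
  have "(norm (HH y k - HH y 0))\<^sup>2 = (\<Sum>i<n. (norm (proj blk i (HH y k - HH y 0)))\<^sup>2)"
    by (rule norm_decomp[OF blk_range])
  also have "\<dots> \<le> (\<Sum>i<n. (c * norm (proj blk i F))\<^sup>2)"
  proof (rule sum_mono)
    fix i assume "i \<in> {..<n}"
    then have i: "i < n" by simp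
    have e: "proj blk i (HH y k - HH y 0) = grad i (y + proj blk i (zz y k - y)) - grad i (y + proj blk i 0)"
      using proj_HH[OF i, of y k] proj_HH[OF i, of y 0] by (simp add: proj_diff)
    have "norm (proj blk i (HH y k - HH y 0)) \<le> L i * norm (proj blk i (zz y k - y) - proj blk i 0)"
      unfolding e using SM i by blast
    also have "\<dots> \<le> Lm * (\<gamma> * real k * norm (grad i y))"
    proof -
      have "norm (proj blk i (zz y k - y)) \<le> \<gamma> * real k * norm (grad i y)"
        using nonexp[OF i gl, of y k] by simp
      moreover have "L i \<le> Lm" "L i \<ge> 0" using L_le[OF i] SM i by auto
      ultimately show ?thesis by (simp add: mult_mono)
    qed
    also have "\<dots> = c * norm (proj blk i F)" unfolding c_def F_def proj_F[OF i] by simp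
    finally show "(norm (proj blk i (HH y k - HH y 0)))\<^sup>2 \<le> (c * norm (proj blk i F))\<^sup>2"
      by (rule power_mono) simp
  qed
  also have "\<dots> = c\<^sup>2 * (\<Sum>i<n. (norm (proj blk i F))\<^sup>2)"
    by (simp add: power_mult_distrib sum_distrib_left)
  also have "\<dots> = (c * norm F)\<^sup>2"
    by (simp add: norm_decomp[OF blk_range, of F] power_mult_distrib)
  finally have "(norm (HH y k - HH y 0))\<^sup>2 \<le> (c * norm F)\<^sup>2" .
  then have "norm (HH y k - HH y 0) \<le> c * norm F"
    by (rule power2_le_imp_le) (use c0 in simp)
  then show ?thesis unfolding c_def F_def .
qed

lemma zz_sum: "zz y k = y - \<gamma> *\<^sub>R (\<Sum>j<k. HH y j)"
  by (induction k) (simp_all add: zz_Suc scaleR_right_distrib algebra_simps)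

lemma round:
  "(norm (pearl_round grad blk \<gamma> \<tau> y - xs))\<^sup>2
   \<le> (1 - \<gamma> * real \<tau> * \<mu> * (2 - \<gamma> * ell * real \<tau> - 2 * (real \<tau> - 1) * \<gamma> * Lm * sqrt (ell / \<mu> / 3)))
      * (norm (y - xs))\<^sup>2"
proof -
  define F where "F = joint_grad grad blk y"
  define E where "E = (\<Sum>j<\<tau>. HH y j - HH y 0)"
  have pr: "pearl_round grad blk \<gamma> \<tau> y = zz y \<tau>" by (simp add: pearl_round_def zz_def)
  have sumH: "(\<Sum>j<\<tau>. HH y j) = E + real \<tau> *\<^sub>R F"
    unfolding E_def F_def HH_0[symmetric] by (simp add: sum_subtractf sum_constant_scaleR del: sum_constant)
  have eq: "pearl_round grad blk \<gamma> \<tau> y - xs = (y - xs) - (\<gamma> * real \<tau>) *\<^sub>R F - \<gamma> *\<^sub>R E"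
    unfolding pr zz_sum sumH by (simp add: algebra_simps scaleR_right_distrib)
  have EB: "norm E \<le> (Lm * \<gamma> * real \<tau> * (real \<tau> - 1) / 2) * norm F"
  proof -
    have "norm E \<le> (\<Sum>j<\<tau>. norm (HH y j - HH y 0))" unfolding E_def by (rule norm_sum)
    also have "\<dots> \<le> (\<Sum>j<\<tau>. Lm * \<gamma> * norm F * real j)"
      by (rule sum_mono) (use Hdiff in \<open>simp add: F_def algebra_simps\<close>)
    also have "\<dots> = Lm * \<gamma> * norm F * (\<Sum>j<\<tau>. real j)" by (simp add: sum_distrib_left)
    also have "\<dots> = (Lm * \<gamma> * real \<tau> * (real \<tau> - 1) / 2) * norm F"
      by (simp add: sum_real_lt)
    finally show ?thesis .
  qed
  have sF: "F \<bullet> (y - xs) \<ge> \<mu> * (norm (y - xs))\<^sup>2" using QSM unfolding F_def by blast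
  have aF: "(norm F)\<^sup>2 \<le> ell * (F \<bullet> (y - xs))"
  proof -
    have "(1 / ell) * (norm F)\<^sup>2 \<le> F \<bullet> (y - xs)" using SCO unfolding F_def by blast
    then have "ell * ((1 / ell) * (norm F)\<^sup>2) \<le> ell * (F \<bullet> (y - xs))"
      using SCO_l by (intro mult_left_mono) auto
    then show ?thesis using SCO_l by simp
  qed
  have T: "real \<tau> \<ge> 1" using tau by simp
  show ?thesis unfolding eq
    by (rule round_alg[OF QSM_mu mu_le gamma_pos T Lm_pos step sF aF EB])
qed

lemma c_nonneg:
  "0 \<le> 1 - \<gamma> * real \<tau> * \<mu> * (2 - \<gamma> * ell * real \<tau> - 2 * (real \<tau> - 1) * \<gamma> * Lm * sqrt (ell / \<mu> / 3))"
proof -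
  define t where "t = \<gamma> * ell * real \<tau>"
  define z where "z = 2 - \<gamma> * ell * real \<tau> - 2 * (real \<tau> - 1) * \<gamma> * Lm * sqrt (ell / \<mu> / 3)"
  have "0 \<le> 2 * (real \<tau> - 1) * \<gamma> * Lm * sqrt (ell / \<mu> / 3)"
    using tau Lm_pos gamma_pos SCO_l QSM_mu by simp
  then have zt: "z \<le> 2 - t" unfolding z_def t_def by linarith
  have t0: "t \<ge> 0" unfolding t_def using gamma_pos SCO_l by simp
  have z0: "z \<ge> 0"
  proof -
    have "sqrt (ell / \<mu> / 3) \<le> sqrt (ell / \<mu>)"
      using SCO_l QSM_mu by (simp add: real_sqrt_le_iff divide_le_cancel field_simps)
    hence "2 * (real \<tau> - 1) * \<gamma> * Lm * sqrt (ell / \<mu> / 3) \<le> 2 * (real \<tau> - 1) * \<gamma> * Lm * sqrt (ell / \<mu>)"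
      using tau gamma_pos Lm_pos by (intro mult_left_mono) auto
    then show ?thesis unfolding z_def using step by (simp add: algebra_simps)
  qed
  have "\<gamma> * real \<tau> * \<mu> * z \<le> \<gamma> * real \<tau> * ell * z"
    using mu_le gamma_pos z0 by (intro mult_right_mono mult_left_mono) auto
  also have "\<dots> = t * z" unfolding t_def by simp
  also have "\<dots> \<le> t * (2 - t)" using zt t0 by (rule mult_left_mono)
  also have "\<dots> \<le> 1"
  proof -
    have "t * (2 - t) = 1 - (t - 1)\<^sup>2" by (simp add: power2_eq_square algebra_simps)
    moreover have "(t - 1)\<^sup>2 \<ge> 0" by simp
    ultimately show ?thesis by linarith
  qed
  finally show ?thesis unfolding z_def by simp
qed

lemma pearl_bound:
  "(norm (pearl grad blk \<gamma> \<tau> R x0 - xs))\<^sup>2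
   \<le> (1 - \<gamma> * real \<tau> * \<mu> * (2 - \<gamma> * ell * real \<tau> - 2 * (real \<tau> - 1) * \<gamma> * Lm * sqrt (ell / \<mu> / 3))) ^ R
      * (norm (x0 - xs))\<^sup>2"
proof (induction R)
  case 0 then show ?case by (simp add: pearl_def)
next
  case (Suc R)
  let ?c = "1 - \<gamma> * real \<tau> * \<mu> * (2 - \<gamma> * ell * real \<tau> - 2 * (real \<tau> - 1) * \<gamma> * Lm * sqrt (ell / \<mu> / 3))"
  have "pearl grad blk \<gamma> \<tau> (Suc R) x0 = pearl_round grad blk \<gamma> \<tau> (pearl grad blk \<gamma> \<tau> R x0)"
    by (simp add: pearl_def)
  then have "(norm (pearl grad blk \<gamma> \<tau> (Suc R) x0 - xs))\<^sup>2 \<le> ?c * (norm (pearl grad blk \<gamma> \<tau> R x0 - xs))\<^sup>2"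
    using round by simp
  also have "\<dots> \<le> ?c * (?c ^ R * (norm (x0 - xs))\<^sup>2)"
    using Suc.IH c_nonneg by (rule mult_left_mono)
  finally show ?case by simp
qed

end

theorem theorem1:
  fixes n :: nat and blk :: "'c::finite \<Rightarrow> nat"
    and f :: "nat \<Rightarrow> real^'c \<Rightarrow> real" and grad :: "nat \<Rightarrow> real^'c \<Rightarrow> real^'c"
    and L :: "nat \<Rightarrow> real" and \<mu> ell \<gamma> :: real and \<tau> R :: nat
    and x0 xs :: "real^'c"
  assumes n: "n \<ge> 1"
    and blk_range: "\<forall>c. blk c < n"
    and blk_nonempty: "\<forall>i<n. \<exists>c. blk c = i"
    and grad: "\<forall>i<n. \<forall>x. GDERIV (\<lambda>v. f i (x + proj blk i v)) 0 :> grad i x"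
    and CVX: "\<forall>i<n. \<forall>x. convex_on UNIV (\<lambda>v. f i (x + proj blk i v))"
    and SM: "\<forall>i<n. L i > 0 \<and> (\<forall>x u w. norm (grad i (x + proj blk i u) - grad i (x + proj blk i w))
                 \<le> L i * norm (proj blk i u - proj blk i w))"
    and QSM_root: "joint_grad grad blk xs = 0"
    and QSM_unique: "\<forall>y. joint_grad grad blk y = 0 \<longrightarrow> y = xs"
    and QSM_mu: "\<mu> > 0"
    and QSM: "\<forall>x. inner (joint_grad grad blk x) (x - xs) \<ge> \<mu> * (norm (x - xs))\<^sup>2"
    and SCO_l: "ell > 0"
    and SCO: "\<forall>x. inner (joint_grad grad blk x) (x - xs) \<ge> (1 / ell) * (norm (joint_grad grad blk x))\<^sup>2"
    and tau: "\<tau> \<ge> 1" and R: "R \<ge> 1"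
    and gamma_pos: "\<gamma> > 0"
    and gamma_le: "\<gamma> \<le> 1 / (ell * real \<tau> + 2 * (real \<tau> - 1) * Max (L ` {..<n}) * sqrt (ell / \<mu>))"
  shows "(norm (pearl grad blk \<gamma> \<tau> R x0 - xs))\<^sup>2
         \<le> (1 - \<gamma> * real \<tau> * \<mu> *
              (2 - \<gamma> * ell * real \<tau> - 2 * (real \<tau> - 1) * \<gamma> * Max (L ` {..<n}) * sqrt (ell / \<mu> / 3))) ^ R
           * (norm (x0 - xs))\<^sup>2"
proof -
  interpret pearl_setting n blk f grad L \<mu> ell \<gamma> \<tau> xs
    by (rule pearl_setting.intro[OF n blk_range grad CVX SM QSM_mu QSM SCO_l SCO tau gamma_pos gamma_le])
  show ?thesis using pearl_bound[of R x0] unfolding Lm_def .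
qed

end
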